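(* Let $\rho>1$ and $a,b>0$. Let $(\lambda_k)_{k\in\mathbb{N}}$ be a strictly increasing sequence of positive real numbers such that $$\liminf_{k\to\infty}\frac{\lambda_k}{k^{1/\rho}}<\Big(\frac{2}{b\rho e}\Big)^{1/\rho},$$ and let $\Lambda=\{\pm\lambda_k:k\in\mathbb{N}\}\subset\mathbb{R}$. Then $\Lambda$ is a uniqueness set for $\mathfrak{G}_{a,b,\rho}$: if $f\in\mathfrak{G}_{a,b,\rho}$ and $f(\lambda)=0$ for all $\lambda\in\Lambda$, then $f\equiv 0$ on $\mathbb{C}$.
   Context: For $\rho>1$ and $a,b>0$, $\mathfrak{G}_{a,b,\rho}$ is the set of entire functions $f$ for which there is a constant $C>0$ with $|f(x+iy)|\le Ce^{-a|x|^\rho+b|y|^\rho}$ for all $x,y\in\mathbb{R}$. A set $\Lambda\subset\mathbb{C}$ is a uniqueness set for a linear space $U$ of entire functions if every $f\in U$ vanishing on $\Lambda$ is identically zero. *)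

theory Defs
  imports "HOL-Analysis.Analysis" "HOL-Complex_Analysis.Complex_Analysis"
begin

definition G_space :: "real \<Rightarrow> real \<Rightarrow> real \<Rightarrow> (complex \<Rightarrow> complex) set" where
  "G_space a b \<rho> = {f. f holomorphic_on UNIV \<and>
     (\<exists>C>0. \<forall>x y::real. norm (f (Complex x y)) \<le> C * exp (- a * \<bar>x\<bar> powr \<rho> + b * \<bar>y\<bar> powr \<rho>))}"

definition uniqueness_set :: "complex set \<Rightarrow> (complex \<Rightarrow> complex) set \<Rightarrow> bool" where
  "uniqueness_set \<Lambda> U \<longleftrightarrow> (\<forall>f\<in>U. (\<forall>z\<in>\<Lambda>. f z = 0) \<longrightarrow> (\<forall>z. f z = 0))"

end

theory Submission imports Defs begin

lemma maxmod0:
  fixes F :: "complex \<Rightarrow> complex"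
  assumes "F holomorphic_on UNIV" "R > 0" "\<forall>z. norm z = R \<longrightarrow> norm (F z) \<le> M"
  shows "norm (F 0) \<le> M"
proof -
  have "norm ((deriv ^^ 0) F 0) \<le> (fact 0) * M / R^0"
    apply (rule Cauchy_inequality)
    using assms by (auto intro: holomorphic_on_subset holomorphic_on_imp_continuous_on)
  then show ?thesis by simp
qed

lemma blaschke:
  fixes F :: "complex \<Rightarrow> complex"
  assumes "finite Z" "F holomorphic_on UNIV" "\<forall>w\<in>Z. F w = 0"
    "\<forall>w\<in>Z. 0 < norm w \<and> norm w < R" "\<forall>z. norm z = R \<longrightarrow> norm (F z) \<le> M" "R > 0"
  shows "norm (F 0) * (\<Prod>w\<in>Z. R / norm w) \<le> M"
  using assms
proof (induction Z arbitrary: F rule: finite_induct)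
  case empty
  then show ?case using maxmod0[of F R M] by simp
next
  case (insert w Z)
  define G where "G z = (if z = w then deriv F w else (F z - F w) / (z - w)) * ((of_real R ^ 2 - cnj w * z) / of_real R)" for z
  have Fw: "F w = 0" using insert by auto
  have w0: "w \<noteq> 0" using insert by auto
  have hG: "G holomorphic_on UNIV"
    unfolding G_def
    by (intro holomorphic_intros pole_lemma[OF insert.prems(1)]) auto
  have G0: "\<forall>u\<in>Z. G u = 0" using insert Fw unfolding G_def by auto
  have Gb: "norm (G z) \<le> M" if "norm z = R" for z
  proof -
    have zw: "z \<noteq> w" using that insert by auto
    have "(of_real R ^ 2 :: complex) = z * cnj z"
      using complex_norm_square[of z] that by simp
    then have "of_real R ^ 2 - cnj w * z = z * cnj (z - w)" by (simp add: algebra_simps)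
    then have "norm (of_real R ^ 2 - cnj w * z) = R * norm (z - w)"
      using that by (metis complex_mod_cnj norm_mult)
    then have "norm (G z) = norm (F z)"
      using zw Fw \<open>R > 0\<close> unfolding G_def by (simp add: norm_mult norm_divide)
    then show ?thesis using insert.prems that by auto
  qed
  have "norm (G 0) = norm (F 0) * (R / norm w)"
    using w0 Fw \<open>R > 0\<close> unfolding G_def by (simp add: norm_mult norm_divide power2_eq_square)
  moreover have "norm (G 0) * (\<Prod>u\<in>Z. R / norm u) \<le> M"
    using insert.IH[OF hG G0] insert.prems Gb by auto
  ultimately show ?case using insert by (simp add: mult.assoc)
qed


lemma divide_zorder:
  fixes f :: "complex \<Rightarrow> complex"
  assumes "f holomorphic_on UNIV" "\<exists>w. f w \<noteq> 0"
  obtains m F where "F holomorphic_on UNIV" "F 0 \<noteq> 0" "\<forall>z. z \<noteq> 0 \<longrightarrow> F z = f z / z ^ m"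
proof -
  obtain r g n where r: "r > 0" "g holomorphic_on cball 0 r"
     "\<forall>w\<in>cball 0 r. f w = g w * (w - 0) ^ n \<and> g w \<noteq> 0"
    using zorder_exist_zero[OF assms(1) open_UNIV connected_UNIV, of 0] assms(2) by auto
  define F where "F z = (if z = 0 then g 0 else f z / z ^ n)" for z
  have "F holomorphic_on (ball 0 r \<union> (- {0}))"
  proof (rule holomorphic_on_Un)
    show "F holomorphic_on ball 0 r"
      by (rule holomorphic_transform[of g]) (use r in \<open>auto simp: F_def intro: holomorphic_on_subset\<close>)
    show "F holomorphic_on - {0}"
      by (rule holomorphic_transform[of "\<lambda>z. f z / z ^ n"])
         (auto simp: F_def intro!: holomorphic_intros intro: holomorphic_on_subset[OF assms(1)])
  qed auto
  moreover have "ball 0 r \<union> (- {0}) = UNIV" using r by auto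
  ultimately have "F holomorphic_on UNIV" by metis
  moreover have "F 0 \<noteq> 0" using r by (auto simp: F_def)
  moreover have "\<forall>z. z \<noteq> 0 \<longrightarrow> F z = f z / z ^ n" by (auto simp: F_def)
  ultimately show ?thesis using that by blast
qed


lemma liminf_freq:
  fixes X :: "nat \<Rightarrow> real"
  assumes "liminf (\<lambda>k. ereal (X k)) < ereal d"
  obtains c where "c < d" "\<forall>N. \<exists>k\<ge>N. X k < c"
proof -
  obtain e where e: "liminf (\<lambda>k. ereal (X k)) < e" "e < ereal d"
    using assms ereal_dense2 by blast
  then have "\<not> e \<le> liminf (\<lambda>k. ereal (X k))" by simp
  then obtain y where y: "y < e" "\<not> eventually (\<lambda>k. y < ereal (X k)) sequentially"
    unfolding le_Liminf_iff by blast
  then have "frequently (\<lambda>k. ereal (X k) \<le> y) sequentially"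
    by (simp add: not_eventually not_less)
  then have fr: "\<forall>N. \<exists>k\<ge>N. ereal (X k) \<le> y" by (simp add: frequently_sequentially)
  obtain c where c: "y < ereal c" "ereal c < e"
    using y(1) ereal_dense2 by blast
  have "ereal c < ereal d" using c(2) e(2) by (rule less_trans)
  then have "c < d" by simp
  moreover have "\<forall>N. \<exists>k\<ge>N. X k < c"
  proof
    fix N obtain k where "k \<ge> N" "ereal (X k) \<le> y" using fr by blast
    then have "ereal (X k) < ereal c" using c(1) le_less_trans by blast
    then show "\<exists>k\<ge>N. X k < c" using \<open>k \<ge> N\<close> by auto
  qed
  ultimately show ?thesis using that by blast
qed


theorem proposition1:
  fixes \<rho> a b :: real and lam :: "nat \<Rightarrow> real"
  assumes "\<rho> > 1" and "a > 0" and "b > 0"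
    and "strict_mono lam" and "\<And>k. lam k > 0"
    and "liminf (\<lambda>k. ereal (lam k / real k powr (1 / \<rho>)))
           < ereal ((2 / (b * \<rho> * exp 1)) powr (1 / \<rho>))"
  shows "uniqueness_set {complex_of_real (s * lam k) | s k. s \<in> {-1, 1}} (G_space a b \<rho>)"
  unfolding uniqueness_set_def
proof (intro ballI impI allI)
  fix f z0
  assume fG: "f \<in> G_space a b \<rho>"
    and fz: "\<forall>z\<in>{complex_of_real (s * lam k) | s k. s \<in> {-1, 1}}. f z = 0"
  show "f z0 = 0"
  proof (rule ccontr)
    assume nz: "f z0 \<noteq> 0"
    have hf: "f holomorphic_on UNIV" using fG by (simp add: G_space_def)
    obtain C where C: "C > 0" "\<forall>x y::real. norm (f (Complex x y)) \<le> C * exp (- a * \<bar>x\<bar> powr \<rho> + b * \<bar>y\<bar> powr \<rho>)"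
      using fG by (auto simp: G_space_def)
    obtain m F where F: "F holomorphic_on UNIV" "F 0 \<noteq> 0" "\<forall>z. z \<noteq> 0 \<longrightarrow> F z = f z / z ^ m"
      using divide_zorder[OF hf] nz by blast
    define c0 where "c0 = (2 / (b * \<rho> * exp 1)) powr (1 / \<rho>)"
    obtain c where c: "c < c0" "\<forall>N. \<exists>k\<ge>N. lam k / real k powr (1 / \<rho>) < c"
      using liminf_freq[OF assms(6)[folded c0_def]] by blast
    have rho0: "\<rho> > 0" using assms(1) by simp
    have c0pos: "c0 > 0" using assms rho0 by (simp add: c0_def)
    obtain k1 where "k1 \<ge> 1" "lam k1 / real k1 powr (1 / \<rho>) < c" using c(2) by blast
    moreover have "0 < lam k1 / real k1 powr (1 / \<rho>)"
      using assms(5)[of k1] \<open>k1 \<ge> 1\<close> by (intro divide_pos_pos) auto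
    ultimately have cpos: "c > 0" by linarith
    have "c powr \<rho> < c0 powr \<rho>" using cpos c(1) rho0 by (intro powr_less_mono2) auto
    also have "c0 powr \<rho> = 2 / (b * \<rho> * exp 1)"
      unfolding c0_def using assms rho0 by (simp add: powr_powr)
    finally have cr: "c powr \<rho> < 2 / (b * \<rho> * exp 1)" .
    define \<delta> where "\<delta> = 2 / \<rho> - b * exp 1 * c powr \<rho>"
    have dpos: "\<delta> > 0"
    proof -
      have "b * exp 1 * c powr \<rho> < b * exp 1 * (2 / (b * \<rho> * exp 1))"
        using cr assms by (intro mult_strict_left_mono) auto
      also have "\<dots> = 2 / \<rho>" using assms by (simp add: field_simps)
      finally show ?thesis by (simp add: \<delta>_def)
    qed
    define t where "t = exp (1 / \<rho>)"
    have t1: "t > 1" using rho0 by (simp add: t_def)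
    have tr: "t powr \<rho> = exp 1" using rho0 by (simp add: t_def powr_def)
    define K where "K = (t * lam 0) ^ m"
    have Kpos: "K > 0" using t1 assms(5)[of 0] by (simp add: K_def)
    define N where "N = nat \<lceil>ln (C / (K * norm (F 0))) / \<delta>\<rceil> + 1"
    obtain k where k: "k \<ge> N" "lam k / real k powr (1 / \<rho>) < c" using c(2) by blast
    have k1: "k \<ge> 1" using k by (simp add: N_def)
    have lk: "lam k < c * real k powr (1 / \<rho>)"
      using k(2) k1 by (simp add: divide_less_eq)
    have lkr: "lam k powr \<rho> < c powr \<rho> * real k"
    proof -
      have "lam k powr \<rho> < (c * real k powr (1 / \<rho>)) powr \<rho>"
        using lk assms(5)[of k] rho0 by (intro powr_less_mono2) auto
      also have "\<dots> = c powr \<rho> * real k"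
        using cpos rho0 by (simp add: powr_mult powr_powr)
      finally show ?thesis .
    qed
    define R where "R = t * lam k"
    have Rpos: "R > 0" using t1 assms(5)[of k] by (simp add: R_def)
    have lmono: "lam j \<le> lam k" if "j \<le> k" for j
      using assms(4) that by (simp add: strict_mono_less_eq)
    define Z where "Z = (\<lambda>j. complex_of_real (lam j)) ` {..k} \<union> (\<lambda>j. - complex_of_real (lam j)) ` {..k}"
    have finZ: "finite Z" by (simp add: Z_def)
    have Zsub: "\<forall>w\<in>Z. 0 < norm w \<and> norm w < R \<and> R / norm w \<ge> t"
    proof
      fix w assume "w \<in> Z"
      then obtain j where j: "j \<le> k" "norm w = lam j"
        unfolding Z_def using assms(5) by (auto simp: abs_of_pos less_imp_le)
      have "lam j > 0" by (rule assms(5))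
      moreover have "lam j < R" using lmono[OF j(1)] mult_strict_right_mono[OF t1 assms(5)[of k]] by (simp add: R_def)
      moreover have "R / lam j \<ge> t"
        using lmono[OF j(1)] t1 assms(5)[of j] by (simp add: R_def le_divide_eq)
      ultimately show "0 < norm w \<and> norm w < R \<and> R / norm w \<ge> t" using j by simp
    qed
    have FZ: "\<forall>w\<in>Z. F w = 0"
    proof
      fix w assume "w \<in> Z"
      then obtain j where "w = complex_of_real (lam j) \<or> w = - complex_of_real (lam j)"
        unfolding Z_def by auto
      then have "w \<in> {complex_of_real (s * lam k) | s k. s \<in> {-1, 1}}"
      proof
        assume "w = complex_of_real (lam j)"
        then have "w = complex_of_real (1 * lam j)" by simp
        then show ?thesis by blast
      next
        assume "w = - complex_of_real (lam j)"
        then have "w = complex_of_real ((-1) * lam j)" by simp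
        then show ?thesis by blast
      qed
      then have "f w = 0" using fz by blast
      moreover have "w \<noteq> 0" using Zsub \<open>w \<in> Z\<close> by auto
      ultimately show "F w = 0" using F(3) by simp
    qed
    define M where "M = C * exp (b * R powr \<rho>) / R ^ m"
    have Fb: "\<forall>z. norm z = R \<longrightarrow> norm (F z) \<le> M"
    proof (intro allI impI)
      fix z :: complex assume nz: "norm z = R"
      then have z0: "z \<noteq> 0" using Rpos by auto
      have "norm (f z) \<le> C * exp (- a * \<bar>Re z\<bar> powr \<rho> + b * \<bar>Im z\<bar> powr \<rho>)"
        using C(2)[rule_format, of "Re z" "Im z"] by simp
      also have "\<dots> \<le> C * exp (b * R powr \<rho>)"
      proof -
        have "\<bar>Im z\<bar> powr \<rho> \<le> R powr \<rho>"
          using abs_Im_le_cmod[of z] nz rho0 by (intro powr_mono2) auto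
        moreover have "a * \<bar>Re z\<bar> powr \<rho> \<ge> 0" using assms(2) by simp
        moreover have "b * \<bar>Im z\<bar> powr \<rho> \<le> b * R powr \<rho>"
          using calculation(1) assms(3) by (intro mult_left_mono) auto
        ultimately have "- a * \<bar>Re z\<bar> powr \<rho> + b * \<bar>Im z\<bar> powr \<rho> \<le> b * R powr \<rho>"
          by linarith
        then show ?thesis using C(1) by (intro mult_left_mono) auto
      qed
      finally have "norm (f z) \<le> C * exp (b * R powr \<rho>)" .
      then show "norm (F z) \<le> M"
        using F(3) z0 nz Rpos by (simp add: M_def norm_divide norm_power divide_right_mono)
    qed
    have main: "norm (F 0) * (\<Prod>w\<in>Z. R / norm w) \<le> M"
      using blaschke[OF finZ F(1) FZ _ Fb Rpos] Zsub by blast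
    have cardZ: "card Z = 2 * (k + 1)"
    proof -
      have inj: "inj_on lam {..k}" using assms(4) strict_mono_imp_inj_on by blast
      have c1: "card ((\<lambda>j. complex_of_real (lam j)) ` {..k}) = k + 1"
        by (subst card_image) (auto simp: inj_on_def strict_mono_eq[OF assms(4)])
      have c2: "card ((\<lambda>j. - complex_of_real (lam j)) ` {..k}) = k + 1"
        by (subst card_image) (auto simp: inj_on_def strict_mono_eq[OF assms(4)])
      have disj: "(\<lambda>j. complex_of_real (lam j)) ` {..k} \<inter> (\<lambda>j. - complex_of_real (lam j)) ` {..k} = {}"
      proof (rule ccontr)
        assume "\<not> ?thesis"
        then obtain i j where "complex_of_real (lam i) = - complex_of_real (lam j)" by auto
        then have "lam i = - lam j" by (metis of_real_eq_iff of_real_minus)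
        then show False using assms(5)[of i] assms(5)[of j] by simp
      qed
      show ?thesis unfolding Z_def using c1 c2 disj
        by (subst card_Un_disjoint) auto
    qed
    have "t ^ (2 * k) \<le> t ^ card Z" using t1 cardZ by (intro power_increasing) auto
    also have "t ^ card Z = (\<Prod>w\<in>Z. t)" by simp
    also have "\<dots> \<le> (\<Prod>w\<in>Z. R / norm w)"
      using Zsub t1 by (intro prod_mono) auto
    finally have "exp (real k * 2 / \<rho>) \<le> (\<Prod>w\<in>Z. R / norm w)"
      by (simp add: t_def exp_of_nat_mult[symmetric] power_mult)
    then have pZ: "exp (2 * real k / \<rho>) \<le> (\<Prod>w\<in>Z. R / norm w)"
      by (metis mult.commute)
    have "R powr \<rho> = exp 1 * lam k powr \<rho>"
      using t1 assms(5)[of k] by (simp add: R_def powr_mult tr)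
    then have Rr: "R powr \<rho> \<le> exp 1 * c powr \<rho> * real k"
      using lkr by simp
    have RK: "R ^ m \<ge> K"
      unfolding K_def R_def using t1 assms(5)[of 0] lmono[of 0]
      by (intro power_mono) auto
    have "M \<le> C * exp (b * (exp 1 * c powr \<rho> * real k)) / K"
      unfolding M_def using Rr RK Kpos C(1) assms(3)
      by (intro frac_le mult_left_mono) auto
    then have "norm (F 0) * exp (2 * real k / \<rho>) \<le> C * exp (b * (exp 1 * c powr \<rho> * real k)) / K"
      using main pZ by (smt (verit) mult_left_mono norm_ge_zero)
    then have "norm (F 0) * K * exp (2 * real k / \<rho>) \<le> C * exp (b * exp 1 * c powr \<rho> * real k)"
      using Kpos by (simp add: field_simps)
    then have "norm (F 0) * K * (exp (2 * real k / \<rho>) / exp (b * exp 1 * c powr \<rho> * real k)) \<le> C"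
      by (simp add: field_simps)
    also have "exp (2 * real k / \<rho>) / exp (b * exp 1 * c powr \<rho> * real k) = exp (real k * \<delta>)"
      by (simp add: \<delta>_def exp_diff[symmetric] algebra_simps)
    finally have ineq: "norm (F 0) * K * exp (real k * \<delta>) \<le> C" .
    have FK: "norm (F 0) * K > 0" using F(2) Kpos by simp
    have "ln (C / (K * norm (F 0))) / \<delta> < real N" unfolding N_def by linarith
    then have "ln (C / (K * norm (F 0))) < real N * \<delta>" using dpos by (simp add: divide_less_eq)
    also have "\<dots> \<le> real k * \<delta>" using k(1) dpos by (intro mult_right_mono) auto
    finally have lnlt: "ln (C / (K * norm (F 0))) < real k * \<delta>" .
    have "C / (K * norm (F 0)) < exp (real k * \<delta>)"
    proof -
      have "C / (K * norm (F 0)) = exp (ln (C / (K * norm (F 0))))"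
        using C(1) FK by (simp add: mult.commute)
      also have "\<dots> < exp (real k * \<delta>)" using lnlt by simp
      finally show ?thesis .
    qed
    then have "C < norm (F 0) * K * exp (real k * \<delta>)"
      using FK by (simp add: divide_less_eq mult.commute)
    then show False using ineq by simp
  qed
qed

end
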